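(* Let $t\ge 1$ be an integer and $n=2t^2+2t+1$. Let $\mathcal{C}_0\subseteq\mathbb{Z}_n^2$ be a linear $t$-error-correcting perfect code with generator matrix $G=[a~~b]$, and let $\mathcal{C}=\mathbf{x}+\mathcal{C}_0$ for some $\mathbf{x}=(x_1,x_2)\in\mathbb{Z}_n^2$. Let $\mathcal{S}$ be the set of all perfect Sudoku grids with respect to $\mathcal{C}$, and let \[ \mathcal{G}_\mathcal{S}=\langle \tau_2^{x_1+x_2+1}\tau_1^{x_1-x_2}r,\ \tau_1^a\tau_2^b\rangle. \] Then for every $S\in\mathcal{S}$ and every $g\in\mathcal{G}_\mathcal{S}$, we have $g\cdot S\in\mathcal{S}$.
   Context: $\mathbb{Z}_n$ is the integers modulo $n$; Lee weight of $\mathbf{u}\in\mathbb{Z}_n^2$ is $\sum_i\min\{u_i,n-u_i\}$ and Lee distance $d_L(\mathbf{u},\mathbf{v})=\mathrm{wt}_L(\mathbf{u}-\mathbf{v})$. A linear code is a submodule of $\mathbb{Z}_n^2$; a generator matrix is a matrix whose rows form a minimal spanning set. A code with minimum Lee distance $d$ is a perfect code if, with $t=\lfloor (d-1)/2\rfloor$, the Lee balls $\mathcal{B}_t(\mathbf{c})$ of radius $t$ around the codewords cover $\mathbb{Z}_n^2$ (they are then pairwise disjoint); it is $t$-error-correcting if $d\ge 2t+1$. For $n=2t^2+2t+1$, each ball of radius $t$ in $\mathbb{Z}_n^2$ has $n$ points, so such a perfect code has $n$ codewords. A palette grid is an $n\times n$ array with entries in $[n]=\{1,\dots,n\}$ in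 which each symbol occurs exactly $n$ times. Two $n\times n$ arrays with entries in an $n$-set are orthogonal if the $n^2$ ordered pairs of corresponding entries are all distinct. A Sudoku grid with respect to a palette grid $\mathcal{I}$ is a Latin square of order $n$ on $[n]$ orthogonal to $\mathcal{I}$. For a $t$-error-correcting perfect code $\mathcal{C}=\{\mathbf{c}_1,\dots,\mathbf{c}_n\}\subseteq\mathbb{Z}_n^2$, the palette grid $\mathcal{I}_\mathcal{C}$ has rows and columns indexed by $\mathbb{Z}_n$ and entry $i$ at every position $(x,y)\in\mathcal{B}_t(\mathbf{c}_i)$ ($x$ = row, $y$ = column); a perfect Sudoku grid with respect to $\mathcal{C}$ is a Sudoku grid with respect to $\mathcal{I}_\mathcal{C}$. Maps on $n\times n$ arrays $A$ (indices in $\mathbb{Z}_n$): $(r(A))_{i,j}=A_{n-1-j,i}$ (rotation), $(\tau_1(A))_{i,j}=A_{i-1,j}$, $(\tau_2(A))_{i,j}=A_{i,j-1}$ (translations); the group they generate acts on arrays by $\varphi\cdot A=\varphi(A)$ with composition of maps. *)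

theory Defs
  imports Main
begin

text \<open>Elements of Z_n are represented by integers in {0..<n}; Z_n^2 by pairs.
 Arrays indexed by Z_n x Z_n are represented by n-periodic functions int => int => 'a.\<close>

definition Zn2 :: "int \<Rightarrow> (int \<times> int) set" where
  "Zn2 n = {0..<n} \<times> {0..<n}"

definition lee_wt1 :: "int \<Rightarrow> int \<Rightarrow> int" where
  "lee_wt1 n u = min (u mod n) (n - u mod n)"

definition lee_wt :: "int \<Rightarrow> int \<times> int \<Rightarrow> int" where
  "lee_wt n u = lee_wt1 n (fst u) + lee_wt1 n (snd u)"

definition lee_dist :: "int \<Rightarrow> int \<times> int \<Rightarrow> int \<times> int \<Rightarrow> int" where
  "lee_dist n u v = lee_wt n ((fst u - fst v) mod n, (snd u - snd v) mod n)"

definition lee_ball :: "int \<Rightarrow> int \<Rightarrow> int \<times> int \<Rightarrow> (int \<times> int) set" where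
  "lee_ball n t c = {u \<in> Zn2 n. lee_dist n u c \<le> t}"

definition min_lee_dist :: "int \<Rightarrow> (int \<times> int) set \<Rightarrow> int" where
  "min_lee_dist n C = Min {lee_dist n u v | u v. u \<in> C \<and> v \<in> C \<and> u \<noteq> v}"

definition perfect_code :: "int \<Rightarrow> (int \<times> int) set \<Rightarrow> bool" where
  "perfect_code n C \<longleftrightarrow> C \<subseteq> Zn2 n \<and> card C \<ge> 2 \<and>
     (\<Union>c\<in>C. lee_ball n ((min_lee_dist n C - 1) div 2) c) = Zn2 n"

definition t_error_correcting :: "int \<Rightarrow> int \<Rightarrow> (int \<times> int) set \<Rightarrow> bool" where
  "t_error_correcting n t C \<longleftrightarrow> min_lee_dist n C \<ge> 2 * t + 1"

definition span1 :: "int \<Rightarrow> int \<Rightarrow> int \<Rightarrow> (int \<times> int) set" where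
  "span1 n a b = {((k * a) mod n, (k * b) mod n) | k. True}"

definition translate_code :: "int \<Rightarrow> int \<times> int \<Rightarrow> (int \<times> int) set \<Rightarrow> (int \<times> int) set" where
  "translate_code n x C = {((fst x + fst c) mod n, (snd x + snd c) mod n) | c. c \<in> C}"

definition periodic :: "int \<Rightarrow> (int \<Rightarrow> int \<Rightarrow> 'a) \<Rightarrow> bool" where
  "periodic n A \<longleftrightarrow> (\<forall>i j. A (i mod n) (j mod n) = A i j)"

text \<open>Palette grid of a code with enumeration c_1..c_n (x = row, y = column).\<close>
definition palette :: "int \<Rightarrow> int \<Rightarrow> (nat \<Rightarrow> int \<times> int) \<Rightarrow> int \<Rightarrow> int \<Rightarrow> nat" where
  "palette n t c x y = (THE i. i \<in> {1..nat n} \<and> (x mod n, y mod n) \<in> lee_ball n t (c i))"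

definition latin_square :: "int \<Rightarrow> (int \<Rightarrow> int \<Rightarrow> nat) \<Rightarrow> bool" where
  "latin_square n S \<longleftrightarrow>
     (\<forall>x\<in>{0..<n}. bij_betw (\<lambda>y. S x y) {0..<n} {1..nat n}) \<and>
     (\<forall>y\<in>{0..<n}. bij_betw (\<lambda>x. S x y) {0..<n} {1..nat n})"

definition orthogonal :: "int \<Rightarrow> (int \<Rightarrow> int \<Rightarrow> nat) \<Rightarrow> (int \<Rightarrow> int \<Rightarrow> nat) \<Rightarrow> bool" where
  "orthogonal n A B \<longleftrightarrow> inj_on (\<lambda>(x, y). (A x y, B x y)) ({0..<n} \<times> {0..<n})"

definition sudoku_grid :: "int \<Rightarrow> (int \<Rightarrow> int \<Rightarrow> nat) \<Rightarrow> (int \<Rightarrow> int \<Rightarrow> nat) \<Rightarrow> bool" where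
  "sudoku_grid n I S \<longleftrightarrow> latin_square n S \<and> orthogonal n S I"

definition perfect_sudoku_grids :: "int \<Rightarrow> int \<Rightarrow> (nat \<Rightarrow> int \<times> int) \<Rightarrow> (int \<Rightarrow> int \<Rightarrow> nat) set" where
  "perfect_sudoku_grids n t c = {S. periodic n S \<and> sudoku_grid n (palette n t c) S}"

definition rot :: "int \<Rightarrow> (int \<Rightarrow> int \<Rightarrow> 'a) \<Rightarrow> (int \<Rightarrow> int \<Rightarrow> 'a)" where
  "rot n A = (\<lambda>i j. A (n - 1 - j) i)"

definition tau1_pow :: "int \<Rightarrow> (int \<Rightarrow> int \<Rightarrow> 'a) \<Rightarrow> (int \<Rightarrow> int \<Rightarrow> 'a)" where
  "tau1_pow k A = (\<lambda>i j. A (i - k) j)"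

definition tau2_pow :: "int \<Rightarrow> (int \<Rightarrow> int \<Rightarrow> 'a) \<Rightarrow> (int \<Rightarrow> int \<Rightarrow> 'a)" where
  "tau2_pow k A = (\<lambda>i j. A i (j - k))"

inductive_set gen_group :: "('a \<Rightarrow> 'a) set \<Rightarrow> ('a \<Rightarrow> 'a) set" for F where
  gen_id: "id \<in> gen_group F"
| gen_mult: "f \<in> F \<Longrightarrow> g \<in> gen_group F \<Longrightarrow> f \<circ> g \<in> gen_group F"
| gen_inv: "f \<in> F \<Longrightarrow> g \<in> gen_group F \<Longrightarrow> inv f \<circ> g \<in> gen_group F"

end

theory Submission
  imports Defs
begin

lemma lw_mod: "lee_wt1 n (z mod n) = lee_wt1 n z"
  by (simp add: lee_wt1_def)

lemma lw_cong: "z mod n = w mod n \<Longrightarrow> lee_wt1 n z = lee_wt1 n w"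
  by (simp add: lee_wt1_def)

lemma lw_le:
  assumes n: "n > 0" and c: "n dvd (z - e)"
  shows "lee_wt1 n z \<le> \<bar>e\<bar>"
proof -
  have zm: "z mod n = e mod n" using c by (simp add: mod_eq_dvd_iff)
  have e: "e = n * (e div n) + e mod n" by simp
  have r0: "0 \<le> e mod n" "e mod n < n" using n by auto
  show ?thesis
  proof (cases "e \<ge> 0")
    case True
    then have "e mod n \<le> e" using n by (simp add: zmod_le_nonneg_dividend)
    then show ?thesis using True zm by (simp add: lee_wt1_def)
  next
    case False
    then have "e div n < 0" using n by (simp add: div_neg_pos_less0)
    then have "e div n \<le> -1" by simp
    then have "n * (e div n) \<le> n * (-1)" using n by (intro mult_left_mono) auto
    then have "n - e mod n \<le> -e" using e by linarith
    then show ?thesis using False zm by (simp add: lee_wt1_def)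
  qed
qed

lemma lw_rep:
  assumes n: "n > 0"
  shows "\<exists>e. n dvd (z - e) \<and> \<bar>e\<bar> = lee_wt1 n z"
proof (cases "z mod n \<le> n - z mod n")
  case True
  then show ?thesis using n
    by (intro exI[of _ "z mod n"]) (auto simp: lee_wt1_def mod_eq_dvd_iff[symmetric])
next
  case False
  have eq: "z - (z mod n - n) = n * (z div n + 1)"
    using div_mult_mod_eq[of z n] by (simp add: algebra_simps)
  have "n dvd (z - (z mod n - n))" unfolding eq by simp
  moreover have "\<bar>z mod n - n\<bar> = n - z mod n" using pos_mod_bound[of n z] n by linarith
  ultimately show ?thesis using n False
    by (intro exI[of _ "z mod n - n"]) (auto simp: lee_wt1_def)
qed

lemma lw_nonneg: "n > 0 \<Longrightarrow> 0 \<le> lee_wt1 n z"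
  proof -
    assume n: "n > 0"
    have "z mod n < n" "0 \<le> z mod n" using n by auto
    then show ?thesis unfolding lee_wt1_def by linarith
  qed

lemma lw_neg: assumes "n > 0" shows "lee_wt1 n (- z) = lee_wt1 n z"
proof -
  obtain e where e: "n dvd (z - e)" "\<bar>e\<bar> = lee_wt1 n z" using lw_rep assms by blast
  obtain e' where e': "n dvd (-z - e')" "\<bar>e'\<bar> = lee_wt1 n (-z)" using lw_rep assms by blast
  have "-z - (-e) = -(z - e)" by simp
  then have "n dvd (-z - (-e))" using e(1) by (simp only: dvd_minus_iff)
  then have 1: "lee_wt1 n (-z) \<le> \<bar>e\<bar>" using lw_le assms by fastforce
  have "z - (-e') = -(-z - e')" by simp
  then have "n dvd (z - (-e'))" using e'(1) by (simp only: dvd_minus_iff)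
  then have 2: "lee_wt1 n z \<le> \<bar>e'\<bar>" using lw_le assms by fastforce
  have 3: "lee_wt1 n (-z) \<le> lee_wt1 n z" using 1 e(2) by simp
  have 4: "lee_wt1 n z \<le> lee_wt1 n (-z)" using 2 e'(2) by simp
  show ?thesis using 3 4 by (rule antisym)
qed

lemma lw_tri: assumes "n > 0" shows "lee_wt1 n (z + w) \<le> lee_wt1 n z + lee_wt1 n w"
proof -
  obtain e where e: "n dvd (z - e)" "\<bar>e\<bar> = lee_wt1 n z" using lw_rep assms by blast
  obtain e' where e': "n dvd (w - e')" "\<bar>e'\<bar> = lee_wt1 n w" using lw_rep assms by blast
  have "n dvd ((z + w) - (e + e'))" using e(1) e'(1)
    using dvd_add[OF e(1) e'(1)] by (simp add: algebra_simps)
  then have "lee_wt1 n (z + w) \<le> \<bar>e + e'\<bar>" using lw_le assms by blast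
  moreover have "\<bar>e + e'\<bar> \<le> \<bar>e\<bar> + \<bar>e'\<bar>" by (rule abs_triangle_ineq)
  ultimately show ?thesis using e(2) e'(2) by simp
qed

definition lclose :: "int \<Rightarrow> int \<Rightarrow> int \<times> int \<Rightarrow> int \<times> int \<Rightarrow> bool" where
  "lclose n t u v \<longleftrightarrow> lee_wt1 n (fst u - fst v) + lee_wt1 n (snd u - snd v) \<le> t"

lemma lclose_cong:
  assumes "u1 mod n = u1' mod n" "u2 mod n = u2' mod n" "v1 mod n = v1' mod n" "v2 mod n = v2' mod n"
  shows "lclose n t (u1, u2) (v1, v2) = lclose n t (u1', u2') (v1', v2')"
proof -
  have "(u1 - v1) mod n = (u1' - v1') mod n" by (rule mod_diff_cong) (use assms in auto)
  then have 1: "lee_wt1 n (u1 - v1) = lee_wt1 n (u1' - v1')" by (rule lw_cong)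
  have "(u2 - v2) mod n = (u2' - v2') mod n" by (rule mod_diff_cong) (use assms in auto)
  then have 2: "lee_wt1 n (u2 - v2) = lee_wt1 n (u2' - v2')" by (rule lw_cong)
  show ?thesis unfolding lclose_def using 1 2 by simp
qed

lemma ball_iff:
  assumes "n > 0"
  shows "(x mod n, y mod n) \<in> lee_ball n t q \<longleftrightarrow> lclose n t (x, y) q"
proof -
  have 1: "lee_wt1 n ((x mod n - fst q) mod n) = lee_wt1 n (x - fst q)"
    unfolding lw_mod by (rule lw_cong) (simp add: mod_diff_left_eq)
  have 2: "lee_wt1 n ((y mod n - snd q) mod n) = lee_wt1 n (y - snd q)"
    unfolding lw_mod by (rule lw_cong) (simp add: mod_diff_left_eq)
  have "lee_dist n (x mod n, y mod n) q = lee_wt1 n (x - fst q) + lee_wt1 n (y - snd q)"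
    unfolding lee_dist_def lee_wt_def using 1 2 by simp
  then show ?thesis using assms unfolding lee_ball_def Zn2_def lclose_def by auto
qed

definition LAT :: "int \<Rightarrow> (int \<Rightarrow> int \<Rightarrow> nat) \<Rightarrow> bool" where
  "LAT n S \<longleftrightarrow> (\<forall>i j. S i j \<in> {1..nat n}) \<and> (\<forall>i j j'. S i j = S i j' \<longrightarrow> j mod n = j' mod n)
     \<and> (\<forall>i i' j. S i j = S i' j \<longrightarrow> i mod n = i' mod n)"

definition ORTH :: "int \<Rightarrow> (int \<Rightarrow> int \<Rightarrow> nat) \<Rightarrow> (int \<Rightarrow> int \<Rightarrow> nat) \<Rightarrow> bool" where
  "ORTH n S I \<longleftrightarrow> (\<forall>i j i' j'. S i j = S i' j' \<and> I i j = I i' j' \<longrightarrow> i mod n = i' mod n \<and> j mod n = j' mod n)"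

lemma per_eq: "periodic n S \<Longrightarrow> S i j = S (i mod n) (j mod n)"
  unfolding periodic_def by simp

lemma palette_per: "palette n t c (x mod n) (y mod n) = palette n t c x y"
  unfolding palette_def by simp

lemma palette_periodic: "periodic n (palette n t c)"
  unfolding periodic_def using palette_per by blast

lemma lat_of:
  assumes n: "n > 0" and p: "periodic n S" and l: "latin_square n S"
  shows "LAT n S"
proof -
  have r: "\<And>x. x \<in> {0..<n} \<Longrightarrow> bij_betw (\<lambda>y. S x y) {0..<n} {1..nat n}"
   and c: "\<And>y. y \<in> {0..<n} \<Longrightarrow> bij_betw (\<lambda>x. S x y) {0..<n} {1..nat n}"
    using l unfolding latin_square_def by auto
  have m: "\<And>z. z mod n \<in> {0..<n}" using n by simp
  have 1: "S i j \<in> {1..nat n}" for i j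
    using bij_betwE[OF r[OF m[of i]]] m[of j] per_eq[OF p, of i j] by auto
  have 2: "j mod n = j' mod n" if "S i j = S i j'" for i j j'
  proof -
    have "S (i mod n) (j mod n) = S (i mod n) (j' mod n)" using that per_eq[OF p] by metis
    then show ?thesis using bij_betw_imp_inj_on[OF r[OF m[of i]]] m[of j] m[of j']
      by (auto dest: inj_onD)
  qed
  have 3: "i mod n = i' mod n" if "S i j = S i' j" for i i' j
  proof -
    have "S (i mod n) (j mod n) = S (i' mod n) (j mod n)" using that per_eq[OF p] by metis
    then show ?thesis using bij_betw_imp_inj_on[OF c[OF m[of j]]] m[of i] m[of i']
      by (auto dest: inj_onD)
  qed
  show ?thesis unfolding LAT_def using 1 2 3 by blast
qed

lemma bij_of_inj:
  assumes "inj_on f A" "f ` A \<subseteq> B" "card A = card B" "finite B"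
  shows "bij_betw f A B"
proof -
  have "card (f ` A) = card B" using assms(3) card_image[OF assms(1)] by simp
  then have "f ` A = B" using card_subset_eq[of B "f ` A"] assms by blast
  then show ?thesis using assms unfolding bij_betw_def by blast
qed

lemma lat_to:
  assumes n: "n > 0" and l: "LAT n S"
  shows "latin_square n S"
proof -
  have cd: "card {0..<n} = card {1..nat n}" using n by simp
  have modid: "\<And>z. z \<in> {0..<n} \<Longrightarrow> z mod n = z" by simp
  have vals: "\<And>i j. S i j \<in> {1..nat n}" using l unfolding LAT_def by blast
  have r: "bij_betw (\<lambda>y. S x y) {0..<n} {1..nat n}" for x
  proof (rule bij_of_inj)
    show "inj_on (\<lambda>y. S x y) {0..<n}"
    proof (rule inj_onI)
      fix y y' assume "y \<in> {0..<n}" "y' \<in> {0..<n}" "S x y = S x y'"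
      moreover have "y mod n = y' mod n" using l \<open>S x y = S x y'\<close> unfolding LAT_def by blast
      ultimately show "y = y'" using modid by simp
    qed
  qed (use vals cd in auto)
  have c: "bij_betw (\<lambda>x. S x y) {0..<n} {1..nat n}" for y
  proof (rule bij_of_inj)
    show "inj_on (\<lambda>x. S x y) {0..<n}"
    proof (rule inj_onI)
      fix x x' assume "x \<in> {0..<n}" "x' \<in> {0..<n}" "S x y = S x' y"
      moreover have "x mod n = x' mod n" using l \<open>S x y = S x' y\<close> unfolding LAT_def by blast
      ultimately show "x = x'" using modid by simp
    qed
  qed (use vals cd in auto)
  show ?thesis unfolding latin_square_def using r c by blast
qed

lemma orth_of:
  assumes n: "n > 0" and p: "periodic n S" and pI: "periodic n I" and o: "orthogonal n S I"
  shows "ORTH n S I"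
  unfolding ORTH_def
proof (intro allI impI)
  fix i j i' j' assume h: "S i j = S i' j' \<and> I i j = I i' j'"
  have "(S (i mod n) (j mod n), I (i mod n) (j mod n)) = (S (i' mod n) (j' mod n), I (i' mod n) (j' mod n))"
    using h per_eq[OF p] per_eq[OF pI] by metis
  then have eq: "(\<lambda>(x, y). (S x y, I x y)) (i mod n, j mod n) = (\<lambda>(x, y). (S x y, I x y)) (i' mod n, j' mod n)"
    by simp
  have m: "(i mod n, j mod n) \<in> {0..<n} \<times> {0..<n}" "(i' mod n, j' mod n) \<in> {0..<n} \<times> {0..<n}"
    using n by auto
  have "(i mod n, j mod n) = (i' mod n, j' mod n)"
    using inj_onD[OF o[unfolded orthogonal_def] eq m] .
  then show "i mod n = i' mod n \<and> j mod n = j' mod n" by simp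
qed

lemma orth_to:
  assumes o: "ORTH n S I"
  shows "orthogonal n S I"
  unfolding orthogonal_def
proof (rule inj_onI)
  fix u v assume u: "u \<in> {0..<n} \<times> {0..<n}" and v: "v \<in> {0..<n} \<times> {0..<n}"
    and e: "(case u of (x, y) \<Rightarrow> (S x y, I x y)) = (case v of (x, y) \<Rightarrow> (S x y, I x y))"
  obtain x y x' y' where uv: "u = (x, y)" "v = (x', y')" by (cases u, cases v) auto
  have "S x y = S x' y' \<and> I x y = I x' y'" using e uv by simp
  then have "x mod n = x' mod n \<and> y mod n = y' mod n" using o unfolding ORTH_def by blast
  moreover have "x mod n = x" "y mod n = y" "x' mod n = x'" "y' mod n = y'" using u v uv by auto
  ultimately show "u = v" using uv by simp
qed

lemma P_of:
  assumes n: "n > 0" and S: "S \<in> perfect_sudoku_grids n t c"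
  shows "periodic n S \<and> LAT n S \<and> ORTH n S (palette n t c)"
  using S lat_of[OF n] orth_of[OF n _ palette_periodic]
  unfolding perfect_sudoku_grids_def sudoku_grid_def by blast

lemma P_to:
  assumes n: "n > 0" and "periodic n S" "LAT n S" "ORTH n S (palette n t c)"
  shows "S \<in> perfect_sudoku_grids n t c"
  using assms lat_to[OF n] orth_to
  unfolding perfect_sudoku_grids_def sudoku_grid_def by blast

lemma gen_preserve:
  fixes n t :: int and c :: "nat \<Rightarrow> int \<times> int" and f g :: "int \<Rightarrow> int \<Rightarrow> int"
    and S :: "int \<Rightarrow> int \<Rightarrow> nat"
  assumes n: "n > 0"
  and pal1: "\<And>x y. palette n t c x y \<in> {1..nat n} \<and> lclose n t (x,y) (c (palette n t c x y))"
  and pal2: "\<And>x y i. i \<in> {1..nat n} \<Longrightarrow> lclose n t (x,y) (c i) \<Longrightarrow> palette n t c x y = i"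
  and hcode: "\<And>i. i \<in> {1..nat n} \<Longrightarrow> \<exists>j\<in>{1..nat n}. f (fst (c i)) (snd (c i)) mod n = fst (c j) mod n
                  \<and> g (fst (c i)) (snd (c i)) mod n = snd (c j) mod n"
  and hiso: "\<And>p1 p2 q1 q2. lclose n t (p1,p2) (q1,q2) \<Longrightarrow> lclose n t (f p1 p2, g p1 p2) (f q1 q2, g q1 q2)"
  and hperf: "\<And>i j. f (i mod n) (j mod n) mod n = f i j mod n"
  and hperg: "\<And>i j. g (i mod n) (j mod n) mod n = g i j mod n"
  and hinj: "\<And>i j i' j'. f i j mod n = f i' j' mod n \<Longrightarrow> g i j mod n = g i' j' mod n
                \<Longrightarrow> i mod n = i' mod n \<and> j mod n = j' mod n"
  and hrow: "\<And>i j j'. f i j mod n = f i j' mod n \<or> g i j mod n = g i j' mod n"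
  and hcol: "\<And>i i' j. f i j mod n = f i' j mod n \<or> g i j mod n = g i' j mod n"
  and S: "S \<in> perfect_sudoku_grids n t c"
  shows "(\<lambda>i j. S (f i j) (g i j)) \<in> perfect_sudoku_grids n t c"
proof -
  define I where "I = palette n t c"
  have per: "periodic n S" and lat: "LAT n S" and orth: "ORTH n S I"
    using P_of[OF n S] unfolding I_def by auto
  have vals: "\<And>i j. S i j \<in> {1..nat n}"
   and rowS: "\<And>i j j'. S i j = S i j' \<Longrightarrow> j mod n = j' mod n"
   and colS: "\<And>i i' j. S i j = S i' j \<Longrightarrow> i mod n = i' mod n"
    using lat unfolding LAT_def by blast+
  have sc1: "v mod n = v' mod n" if "u mod n = u' mod n" "S u v = S u' v'" for u u' v v'
  proof -
    have "S u' v = S u v" by (simp only: per_eq[OF per, of u v] per_eq[OF per, of u' v] that(1))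
    then have "S u' v = S u' v'" using that(2) by simp
    then show ?thesis by (rule rowS)
  qed
  have sc2: "u mod n = u' mod n" if "v mod n = v' mod n" "S u v = S u' v'" for u u' v v'
  proof -
    have "S u v' = S u v" by (simp only: per_eq[OF per, of u v] per_eq[OF per, of u v'] that(1))
    then have "S u v' = S u' v'" using that(2) by simp
    then show ?thesis by (rule colS)
  qed
  define S' where "S' = (\<lambda>i j. S (f i j) (g i j))"
  have perS': "periodic n S'"
    unfolding periodic_def S'_def
  proof (intro allI)
    fix i j
    have "S (f (i mod n) (j mod n)) (g (i mod n) (j mod n))
        = S (f (i mod n) (j mod n) mod n) (g (i mod n) (j mod n) mod n)" by (rule per_eq[OF per])
    also have "\<dots> = S (f i j mod n) (g i j mod n)" using hperf hperg by simp
    also have "\<dots> = S (f i j) (g i j)" using per_eq[OF per, of "f i j" "g i j"] by simp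
    finally show "S (f (i mod n) (j mod n)) (g (i mod n) (j mod n)) = S (f i j) (g i j)" .
  qed
  have latS': "LAT n S'"
    unfolding LAT_def
  proof (intro conjI allI impI)
    fix i j show "S' i j \<in> {1..nat n}" unfolding S'_def using vals by blast
  next
    fix i j j' assume e: "S' i j = S' i j'"
    have e': "S (f i j) (g i j) = S (f i j') (g i j')" using e unfolding S'_def .
    have "f i j mod n = f i j' mod n \<and> g i j mod n = g i j' mod n"
    proof (cases "f i j mod n = f i j' mod n")
      case True then show ?thesis using sc1[OF True e'] by simp
    next
      case False then have "g i j mod n = g i j' mod n" using hrow[where i=i and j=j and j'=j'] by simp
      then show ?thesis using sc2[OF _ e'] by simp
    qed
    then show "j mod n = j' mod n" using hinj by blast
  next
    fix i i' j assume e: "S' i j = S' i' j"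
    have e': "S (f i j) (g i j) = S (f i' j) (g i' j)" using e unfolding S'_def .
    have "f i j mod n = f i' j mod n \<and> g i j mod n = g i' j mod n"
    proof (cases "f i j mod n = f i' j mod n")
      case True then show ?thesis using sc1[OF True e'] by simp
    next
      case False then have "g i j mod n = g i' j mod n" using hcol[where i=i and i'=i' and j=j] by simp
      then show ?thesis using sc2[OF _ e'] by simp
    qed
    then show "i mod n = i' mod n" using hinj by blast
  qed
  have key1: "I (f x y) (g x y) = j" if "i \<in> {1..nat n}" "lclose n t (x, y) (c i)"
     "j \<in> {1..nat n}" "f (fst (c i)) (snd (c i)) mod n = fst (c j) mod n"
     "g (fst (c i)) (snd (c i)) mod n = snd (c j) mod n" for x y i j
  proof -
    have "lclose n t (f x y, g x y) (f (fst (c i)) (snd (c i)), g (fst (c i)) (snd (c i)))"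
      using hiso that(2) by (cases "c i") auto
    then have "lclose n t (f x y, g x y) (fst (c j), snd (c j))"
      using lclose_cong[of "f x y" n "f x y" "g x y" "g x y"] that(4,5) by blast
    then show ?thesis unfolding I_def using pal2 that(3) by simp
  qed
  have key: "I (f x y) (g x y) = I (f x' y') (g x' y')" if "I x y = I x' y'" for x y x' y'
  proof -
    define i where "i = I x y"
    have i: "i \<in> {1..nat n}" "lclose n t (x, y) (c i)" using pal1 unfolding i_def I_def by auto
    have i': "lclose n t (x', y') (c i)" using pal1 that unfolding i_def I_def by metis
    obtain j where j: "j \<in> {1..nat n}" "f (fst (c i)) (snd (c i)) mod n = fst (c j) mod n"
        "g (fst (c i)) (snd (c i)) mod n = snd (c j) mod n" using hcode[OF i(1)] by blast
    show ?thesis using key1[OF i j] key1[OF i(1) i' j] by simp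
  qed
  have orthS': "ORTH n S' I"
    unfolding ORTH_def
  proof (intro allI impI)
    fix i j i' j' assume e: "S' i j = S' i' j' \<and> I i j = I i' j'"
    then have "I (f i j) (g i j) = I (f i' j') (g i' j')" using key by blast
    then have "f i j mod n = f i' j' mod n \<and> g i j mod n = g i' j' mod n"
      using orth e unfolding ORTH_def S'_def by blast
    then show "i mod n = i' mod n \<and> j mod n = j' mod n" using hinj by blast
  qed
  show ?thesis using P_to[OF n perS' latS'] orthS' unfolding S'_def I_def by blast
qed

lemma dvd_small: fixes n z :: int assumes "n dvd z" "\<bar>z\<bar> < n" shows "z = 0"
proof (rule ccontr)
  assume "z \<noteq> 0"
  then have "\<bar>n\<bar> \<le> \<bar>z\<bar>" using assms(1) by (rule dvd_imp_le_int)
  then show False using assms(2) by linarith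
qed

lemma mod_eq_small: fixes n x y :: int assumes "x mod n = y mod n" "\<bar>x - y\<bar> < n" shows "x = y"
  using dvd_small[of n "x - y"] assms by (simp add: mod_eq_dvd_iff)

lemma n_big: fixes t n :: int assumes "t \<ge> 1" "n = 2 * t\<^sup>2 + 2 * t + 1" shows "n \<ge> 4 * t + 1"
proof -
  have "t * t \<ge> 1 * t" using assms(1) by (intro mult_right_mono) auto
  then show ?thesis using assms(2) by (simp add: power2_eq_square)
qed

lemma ball_card:
  fixes t n :: int and v :: "int \<times> int"
  assumes t: "t \<ge> 1" and nd: "n = 2 * t\<^sup>2 + 2 * t + 1"
  shows "nat n \<le> card (lee_ball n t v)"
proof -
  have nb: "n \<ge> 4 * t + 1" using n_big[OF t nd] .
  have n: "n > 0" using nb t by linarith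
  obtain v1 v2 where v: "v = (v1, v2)" by (cases v)
  define h1 where "h1 = (\<lambda>(i::int, j::int). ((v1 + i - j) mod n, (v2 + i + j - t) mod n))"
  define h2 where "h2 = (\<lambda>(i::int, j::int). ((v1 + i - j) mod n, (v2 + i + j - t + 1) mod n))"
  define A where "A = {0..t} \<times> {0..t}"
  define B where "B = {0..t - 1} \<times> {0..t - 1}"
  have lw_self: "lee_wt1 n z \<le> \<bar>z\<bar>" for z using lw_le[OF n, of z z] by simp
  have sub1: "h1 ` A \<subseteq> lee_ball n t v"
  proof
    fix q assume "q \<in> h1 ` A"
    then obtain i j where ij: "0 \<le> i" "i \<le> t" "0 \<le> j" "j \<le> t" "q = h1 (i, j)" unfolding A_def by auto
    have "\<bar>i - j\<bar> + \<bar>i + j - t\<bar> \<le> t" using ij by arith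
    then have "lee_wt1 n (i - j) + lee_wt1 n (i + j - t) \<le> t"
      using lw_self[of "i - j"] lw_self[of "i + j - t"] by linarith
    moreover have "v1 + i - j - v1 = i - j" "v2 + i + j - t - v2 = i + j - t" by simp_all
    ultimately have "lclose n t (v1 + i - j, v2 + i + j - t) v" unfolding lclose_def v fst_conv snd_conv by metis
    then show "q \<in> lee_ball n t v" using ball_iff[OF n] ij(5) unfolding h1_def by simp
  qed
  have sub2: "h2 ` B \<subseteq> lee_ball n t v"
  proof
    fix q assume "q \<in> h2 ` B"
    then obtain i j where ij: "0 \<le> i" "i \<le> t - 1" "0 \<le> j" "j \<le> t - 1" "q = h2 (i, j)" unfolding B_def by auto
    have "\<bar>i - j\<bar> + \<bar>i + j - t + 1\<bar> \<le> t" using ij by arith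
    then have "lee_wt1 n (i - j) + lee_wt1 n (i + j - t + 1) \<le> t"
      using lw_self[of "i - j"] lw_self[of "i + j - t + 1"] by linarith
    moreover have "v1 + i - j - v1 = i - j" "v2 + i + j - t + 1 - v2 = i + j - t + 1" by simp_all
    ultimately have "lclose n t (v1 + i - j, v2 + i + j - t + 1) v" unfolding lclose_def v fst_conv snd_conv by metis
    then show "q \<in> lee_ball n t v" using ball_iff[OF n] ij(5) unfolding h2_def by simp
  qed
  have inj1: "inj_on h1 A"
  proof (rule inj_onI)
    fix p q assume p: "p \<in> A" and q: "q \<in> A" and e: "h1 p = h1 q"
    obtain i j i' j' where pq: "p = (i, j)" "q = (i', j')" by (cases p, cases q) auto
    have r: "0 \<le> i" "i \<le> t" "0 \<le> j" "j \<le> t" "0 \<le> i'" "i' \<le> t" "0 \<le> j'" "j' \<le> t"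
      using p q pq unfolding A_def by auto
    have "v1 + i - j = v1 + i' - j'"
    proof (rule mod_eq_small[of _ n])
      show "(v1 + i - j) mod n = (v1 + i' - j') mod n" using e pq unfolding h1_def by simp
      show "\<bar>(v1 + i - j) - (v1 + i' - j')\<bar> < n" using r nb by linarith
    qed
    moreover have "v2 + i + j - t = v2 + i' + j' - t"
    proof (rule mod_eq_small[of _ n])
      show "(v2 + i + j - t) mod n = (v2 + i' + j' - t) mod n" using e pq unfolding h1_def by simp
      show "\<bar>(v2 + i + j - t) - (v2 + i' + j' - t)\<bar> < n" using r nb by linarith
    qed
    ultimately show "p = q" using pq by simp
  qed
  have inj2: "inj_on h2 B"
  proof (rule inj_onI)
    fix p q assume p: "p \<in> B" and q: "q \<in> B" and e: "h2 p = h2 q"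
    obtain i j i' j' where pq: "p = (i, j)" "q = (i', j')" by (cases p, cases q) auto
    have r: "0 \<le> i" "i \<le> t" "0 \<le> j" "j \<le> t" "0 \<le> i'" "i' \<le> t" "0 \<le> j'" "j' \<le> t"
      using p q pq unfolding B_def by auto
    have "v1 + i - j = v1 + i' - j'"
    proof (rule mod_eq_small[of _ n])
      show "(v1 + i - j) mod n = (v1 + i' - j') mod n" using e pq unfolding h2_def by simp
      show "\<bar>(v1 + i - j) - (v1 + i' - j')\<bar> < n" using r nb by linarith
    qed
    moreover have "v2 + i + j - t + 1 = v2 + i' + j' - t + 1"
    proof (rule mod_eq_small[of _ n])
      show "(v2 + i + j - t + 1) mod n = (v2 + i' + j' - t + 1) mod n" using e pq unfolding h2_def by simp
      show "\<bar>(v2 + i + j - t + 1) - (v2 + i' + j' - t + 1)\<bar> < n" using r nb by linarith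
    qed
    ultimately show "p = q" using pq by simp
  qed
  have disj: "h1 ` A \<inter> h2 ` B = {}"
  proof (rule ccontr)
    assume "h1 ` A \<inter> h2 ` B \<noteq> {}"
    then obtain q where q: "q \<in> h1 ` A" "q \<in> h2 ` B" by blast
    from q(1) obtain i j where ij: "(i, j) \<in> A" "q = h1 (i, j)" by auto
    from q(2) obtain i' j' where ij': "(i', j') \<in> B" "q = h2 (i', j')" by auto
    have r: "0 \<le> i" "i \<le> t" "0 \<le> j" "j \<le> t" "0 \<le> i'" "i' \<le> t - 1" "0 \<le> j'" "j' \<le> t - 1"
      using ij(1) ij'(1) unfolding A_def B_def by auto
    have e: "h1 (i, j) = h2 (i', j')" using ij ij' by simp
    have 1: "v1 + i - j = v1 + i' - j'"
    proof (rule mod_eq_small[of _ n])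
      show "(v1 + i - j) mod n = (v1 + i' - j') mod n" using e unfolding h1_def h2_def by simp
      show "\<bar>(v1 + i - j) - (v1 + i' - j')\<bar> < n" using r nb by linarith
    qed
    have 2: "v2 + i + j - t = v2 + i' + j' - t + 1"
    proof (rule mod_eq_small[of _ n])
      show "(v2 + i + j - t) mod n = (v2 + i' + j' - t + 1) mod n" using e unfolding h1_def h2_def by simp
      show "\<bar>(v2 + i + j - t) - (v2 + i' + j' - t + 1)\<bar> < n" using r nb by linarith
    qed
    from 1 2 show False by presburger
  qed
  have fin: "finite (lee_ball n t v)"
    by (rule finite_subset[of _ "{0..<n} \<times> {0..<n}"]) (auto simp: lee_ball_def Zn2_def)
  have cA: "card (h1 ` A) = nat (t + 1) * nat (t + 1)"
    using card_image[OF inj1] unfolding A_def by (simp add: card_cartesian_product)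
  have cB: "card (h2 ` B) = nat t * nat t"
    using card_image[OF inj2] unfolding B_def by (simp add: card_cartesian_product)
  have "card (h1 ` A \<union> h2 ` B) = nat (t + 1) * nat (t + 1) + nat t * nat t"
    using card_Un_disjoint[of "h1 ` A" "h2 ` B"] disj cA cB unfolding A_def B_def by auto
  also have "\<dots> = nat ((t + 1) * (t + 1) + t * t)"
    using t by (simp add: nat_mult_distrib nat_add_distrib)
  also have "(t + 1) * (t + 1) + t * t = n" using nd by (simp add: power2_eq_square algebra_simps)
  finally have "card (h1 ` A \<union> h2 ` B) = nat n" .
  moreover have "card (h1 ` A \<union> h2 ` B) \<le> card (lee_ball n t v)"
    using sub1 sub2 fin by (intro card_mono) auto
  ultimately show ?thesis by simp
qed

lemma code_rep:
  "translate_code n (x1, x2) (span1 n a b) = {((x1 + k*a) mod n, (x2 + k*b) mod n) | k. True}"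
proof (rule set_eqI, rule iffI)
  fix z assume "z \<in> translate_code n (x1, x2) (span1 n a b)"
  then show "z \<in> {((x1 + k*a) mod n, (x2 + k*b) mod n) | k. True}"
    unfolding translate_code_def span1_def by (auto simp: mod_add_right_eq)
next
  fix z assume "z \<in> {((x1 + k*a) mod n, (x2 + k*b) mod n) | k. True}"
  then obtain k where k: "z = ((x1 + k*a) mod n, (x2 + k*b) mod n)" by blast
  have "z = ((fst (x1, x2) + fst ((k*a) mod n, (k*b) mod n)) mod n, (snd (x1, x2) + snd ((k*a) mod n, (k*b) mod n)) mod n)"
    using k by (simp add: mod_add_right_eq)
  moreover have "((k*a) mod n, (k*b) mod n) \<in> span1 n a b" unfolding span1_def by blast
  ultimately show "z \<in> translate_code n (x1, x2) (span1 n a b)" unfolding translate_code_def by blast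
qed

lemma md:
  fixes n t a b m :: int
  assumes n: "n > 0" and te: "t_error_correcting n t (span1 n a b)"
    and nz: "(m*a) mod n \<noteq> 0 \<or> (m*b) mod n \<noteq> 0"
  shows "lee_wt1 n (m*a) + lee_wt1 n (m*b) \<ge> 2*t+1"
proof -
  define C0 where "C0 = span1 n a b"
  define X where "X = {lee_dist n u v | u v. u \<in> C0 \<and> v \<in> C0 \<and> u \<noteq> v}"
  have C0sub: "C0 \<subseteq> {0..<n} \<times> {0..<n}" unfolding C0_def span1_def using n by auto
  have finC0: "finite C0" by (rule finite_subset[OF C0sub]) (simp add: finite_cartesian_product)
  have "X \<subseteq> (\<lambda>(u, v). lee_dist n u v) ` (C0 \<times> C0)" unfolding X_def by auto
  moreover have "finite ((\<lambda>(u, v). lee_dist n u v) ` (C0 \<times> C0))" using finC0 by simp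
  ultimately have finX: "finite X" by (rule finite_subset)
  define u where "u = ((m*a) mod n, (m*b) mod n)"
  define v where "v = ((0::int)*a mod n, (0::int)*b mod n)"
  have uC: "u \<in> C0" unfolding u_def C0_def span1_def by blast
  have vC: "v \<in> C0" unfolding v_def C0_def span1_def by blast
  have uv: "u \<noteq> v" using nz unfolding u_def v_def by auto
  have "lee_dist n u v \<in> X" unfolding X_def using uC vC uv by blast
  then have "Min X \<le> lee_dist n u v" using finX by (rule Min_le[rotated])
  moreover have "lee_dist n u v = lee_wt1 n (m*a) + lee_wt1 n (m*b)"
    unfolding u_def v_def lee_dist_def lee_wt_def by (simp add: lw_mod)
  moreover have "Min X \<ge> 2*t+1" using te unfolding t_error_correcting_def min_lee_dist_def X_def C0_def .
  ultimately show ?thesis by linarith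
qed

lemma uniq:
  fixes n t a b x1 x2 :: int and c :: "nat \<Rightarrow> int \<times> int"
  assumes n: "n > 0" and te: "t_error_correcting n t (span1 n a b)"
    and cC: "\<And>i. i \<in> {1..nat n} \<Longrightarrow> \<exists>k. c i = ((x1 + k*a) mod n, (x2 + k*b) mod n)"
    and inj: "inj_on c {1..nat n}"
    and ij: "i \<in> {1..nat n}" "j \<in> {1..nat n}"
    and ci: "lclose n t (p1, p2) (c i)" and cj: "lclose n t (p1, p2) (c j)"
  shows "i = j"
proof -
  obtain k where k: "c i = ((x1 + k*a) mod n, (x2 + k*b) mod n)" using cC ij(1) by blast
  obtain k' where k': "c j = ((x1 + k'*a) mod n, (x2 + k'*b) mod n)" using cC ij(2) by blast
  have "lclose n t (p1, p2) (x1 + k*a, x2 + k*b)" using ci k lclose_cong[of p1 n p1 p2 p2 "(x1 + k*a) mod n" "x1 + k*a" "(x2 + k*b) mod n" "x2 + k*b" t] by simp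
  then have d: "lee_wt1 n (p1 - (x1 + k*a)) + lee_wt1 n (p2 - (x2 + k*b)) \<le> t" unfolding lclose_def by simp
  have "lclose n t (p1, p2) (x1 + k'*a, x2 + k'*b)" using cj k' lclose_cong[of p1 n p1 p2 p2 "(x1 + k'*a) mod n" "x1 + k'*a" "(x2 + k'*b) mod n" "x2 + k'*b" t] by simp
  then have e: "lee_wt1 n (p1 - (x1 + k'*a)) + lee_wt1 n (p2 - (x2 + k'*b)) \<le> t" unfolding lclose_def by simp
  define m where "m = k - k'"
  have ea: "m*a = (p1 - (x1 + k'*a)) + - (p1 - (x1 + k*a))" unfolding m_def by (simp add: algebra_simps)
  have eb: "m*b = (p2 - (x2 + k'*b)) + - (p2 - (x2 + k*b))" unfolding m_def by (simp add: algebra_simps)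
  have "lee_wt1 n (m*a) \<le> lee_wt1 n (p1 - (x1 + k'*a)) + lee_wt1 n (- (p1 - (x1 + k*a)))"
    unfolding ea by (rule lw_tri[OF n])
  also have "\<dots> = lee_wt1 n (p1 - (x1 + k'*a)) + lee_wt1 n (p1 - (x1 + k*a))" by (simp only: lw_neg[OF n])
  finally have 1: "lee_wt1 n (m*a) \<le> lee_wt1 n (p1 - (x1 + k'*a)) + lee_wt1 n (p1 - (x1 + k*a))" .
  have "lee_wt1 n (m*b) \<le> lee_wt1 n (p2 - (x2 + k'*b)) + lee_wt1 n (- (p2 - (x2 + k*b)))"
    unfolding eb by (rule lw_tri[OF n])
  also have "\<dots> = lee_wt1 n (p2 - (x2 + k'*b)) + lee_wt1 n (p2 - (x2 + k*b))" by (simp only: lw_neg[OF n])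
  finally have 2: "lee_wt1 n (m*b) \<le> lee_wt1 n (p2 - (x2 + k'*b)) + lee_wt1 n (p2 - (x2 + k*b))" .
  have "\<not> (lee_wt1 n (m*a) + lee_wt1 n (m*b) \<ge> 2*t+1)" using 1 2 d e by linarith
  then have z: "(m*a) mod n = 0 \<and> (m*b) mod n = 0" using md[OF n te] by blast
  have "(x1 + k*a) mod n = (x1 + k'*a) mod n"
    using z unfolding mod_eq_dvd_iff m_def by (simp add: algebra_simps mod_eq_0_iff_dvd)
  moreover have "(x2 + k*b) mod n = (x2 + k'*b) mod n"
    using z unfolding mod_eq_dvd_iff m_def by (simp add: algebra_simps mod_eq_0_iff_dvd)
  ultimately have "c i = c j" using k k' by simp
  then show ?thesis using inj ij by (auto dest: inj_onD)
qed

lemma cover: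
  fixes n t a b x1 x2 :: int and c :: "nat \<Rightarrow> int \<times> int"
  assumes t: "t \<ge> 1" and nd: "n = 2 * t\<^sup>2 + 2 * t + 1"
    and te: "t_error_correcting n t (span1 n a b)"
    and cC: "\<And>i. i \<in> {1..nat n} \<Longrightarrow> \<exists>k. c i = ((x1 + k*a) mod n, (x2 + k*b) mod n)"
    and inj: "inj_on c {1..nat n}"
  shows "\<exists>i \<in> {1..nat n}. lclose n t (p1, p2) (c i)"
proof -
  have nb: "n \<ge> 4 * t + 1" using n_big[OF t nd] .
  have n: "n > 0" using nb t by linarith
  define Bl where "Bl = (\<lambda>i. lee_ball n t (c i))"
  have sub: "\<Union> (Bl ` {1..nat n}) \<subseteq> Zn2 n" unfolding Bl_def lee_ball_def by auto
  have finZ: "finite (Zn2 n)" unfolding Zn2_def by simp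
  have fin: "\<forall>i\<in>{1..nat n}. finite (Bl i)" unfolding Bl_def lee_ball_def using finZ by auto
  have disj: "\<forall>i\<in>{1..nat n}. \<forall>j\<in>{1..nat n}. i \<noteq> j \<longrightarrow> Bl i \<inter> Bl j = {}"
  proof (intro ballI impI)
    fix i j assume ij: "i \<in> {1..nat n}" "j \<in> {1..nat n}" "i \<noteq> j"
    show "Bl i \<inter> Bl j = {}"
    proof (rule ccontr)
      assume "Bl i \<inter> Bl j \<noteq> {}"
      then obtain q1 q2 where q: "(q1, q2) \<in> Bl i" "(q1, q2) \<in> Bl j" by auto
      then have "(q1, q2) \<in> Zn2 n" unfolding Bl_def lee_ball_def by auto
      then have qm: "q1 mod n = q1" "q2 mod n = q2" unfolding Zn2_def by auto
      have "lclose n t (q1, q2) (c i)" using q(1) ball_iff[OF n, of q1 q2 t "c i"] qm unfolding Bl_def by simp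
      moreover have "lclose n t (q1, q2) (c j)" using q(2) ball_iff[OF n, of q1 q2 t "c j"] qm unfolding Bl_def by simp
      ultimately have "i = j" using uniq[OF n te cC inj ij(1,2)] by blast
      then show False using ij(3) by simp
    qed
  qed
  have "card (\<Union> (Bl ` {1..nat n})) = (\<Sum>i\<in>{1..nat n}. card (Bl i))"
    using card_UN_disjoint[OF _ fin disj] by simp
  also have "\<dots> \<ge> (\<Sum>i\<in>{1..nat n}. nat n)"
    using ball_card[OF t nd] unfolding Bl_def by (intro sum_mono) auto
  finally have "card (\<Union> (Bl ` {1..nat n})) \<ge> nat n * nat n" by simp
  moreover have "card (Zn2 n) = nat n * nat n" unfolding Zn2_def by (simp add: card_cartesian_product)
  ultimately have eq: "\<Union> (Bl ` {1..nat n}) = Zn2 n" using card_seteq[OF finZ sub] by simp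
  have "(p1 mod n, p2 mod n) \<in> Zn2 n" unfolding Zn2_def using n by auto
  then obtain i where i: "i \<in> {1..nat n}" "(p1 mod n, p2 mod n) \<in> Bl i" using eq by blast
  then show ?thesis using ball_iff[OF n] unfolding Bl_def by blast
qed

lemma pal_facts:
  fixes n t :: int and c :: "nat \<Rightarrow> int \<times> int"
  assumes n: "n > 0"
    and cov: "\<And>p1 p2. \<exists>i\<in>{1..nat n}. lclose n t (p1, p2) (c i)"
    and un: "\<And>p1 p2 i j. i \<in> {1..nat n} \<Longrightarrow> j \<in> {1..nat n} \<Longrightarrow> lclose n t (p1, p2) (c i)
               \<Longrightarrow> lclose n t (p1, p2) (c j) \<Longrightarrow> i = j"
  shows "palette n t c x y \<in> {1..nat n} \<and> lclose n t (x, y) (c (palette n t c x y))"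
    and "i \<in> {1..nat n} \<Longrightarrow> lclose n t (x, y) (c i) \<Longrightarrow> palette n t c x y = i"
proof -
  have pe: "palette n t c x y = (THE i. i \<in> {1..nat n} \<and> lclose n t (x, y) (c i))"
    unfolding palette_def using ball_iff[OF n] by simp
  have ex1: "\<exists>!i. i \<in> {1..nat n} \<and> lclose n t (x, y) (c i)"
    using cov[of x y] un[of _ _ x y] by blast
  show "palette n t c x y \<in> {1..nat n} \<and> lclose n t (x, y) (c (palette n t c x y))"
    unfolding pe by (rule theI'[OF ex1])
  show "i \<in> {1..nat n} \<Longrightarrow> lclose n t (x, y) (c i) \<Longrightarrow> palette n t c x y = i"
    unfolding pe using the1_equality[OF ex1] by blast
qed

lemma near:
  fixes n t K1 K2 :: int
  assumes t: "t \<ge> 1" and nb: "n \<ge> 4*t+1"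
    and h: "lee_wt1 n (t+1-K1) + lee_wt1 n (-K2) \<le> t"
    and mdK: "K1 mod n \<noteq> 0 \<or> K2 mod n \<noteq> 0 \<Longrightarrow> lee_wt1 n K1 + lee_wt1 n K2 \<ge> 2*t+1"
  shows "\<exists>u1 u2. n dvd (u1 - K1) \<and> n dvd (u2 - K2) \<and> \<bar>u1 - (t+1)\<bar> + \<bar>u2\<bar> \<le> t \<and> \<bar>u1\<bar> + \<bar>u2\<bar> \<ge> 2*t+1"
proof -
  have n: "n > 0" using t nb by linarith
  obtain e1 where e1: "n dvd (t+1-K1 - e1)" "\<bar>e1\<bar> = lee_wt1 n (t+1-K1)" using lw_rep[OF n] by blast
  obtain e2 where e2: "n dvd (-K2 - e2)" "\<bar>e2\<bar> = lee_wt1 n (-K2)" using lw_rep[OF n] by blast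
  define u1 where "u1 = t+1-e1"
  define u2 where "u2 = -e2"
  have d1: "n dvd (u1 - K1)" using e1(1) unfolding u1_def by (simp add: algebra_simps)
  have eq2: "u2 - K2 = -K2 - e2" unfolding u2_def by simp
  have d2: "n dvd (u2 - K2)" unfolding eq2 using e2(1) .
  have b: "\<bar>u1 - (t+1)\<bar> + \<bar>u2\<bar> \<le> t" using h e1(2) e2(2) unfolding u1_def u2_def by simp
  have "\<bar>u1\<bar> + \<bar>u2\<bar> \<ge> 2*t+1"
  proof (cases "K1 mod n \<noteq> 0 \<or> K2 mod n \<noteq> 0")
    case True
    have "lee_wt1 n K1 \<le> \<bar>u1\<bar>" using lw_le[OF n, of K1 u1] d1 by (simp add: dvd_diff_commute)
    moreover have "lee_wt1 n K2 \<le> \<bar>u2\<bar>" using lw_le[OF n, of K2 u2] d2 by (simp add: dvd_diff_commute)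
    ultimately show ?thesis using mdK[OF True] by linarith
  next
    case False
    then have "n dvd K1" by (simp add: mod_eq_0_iff_dvd)
    then have "n dvd u1" using d1 by (metis diff_add_cancel dvd_add)
    moreover have "1 \<le> u1" "u1 \<le> 2*t+1" using b by arith+
    ultimately have "n \<le> u1" using zdvd_imp_le by simp
    then show ?thesis using nb \<open>u1 \<le> 2*t+1\<close> t by linarith
  qed
  then show ?thesis using d1 d2 b by blast
qed

lemma dvd_det:
  fixes n u1 u2 w1 w2 A1 A2 B1 B2 :: int
  assumes "n dvd (u1 - A1)" "n dvd (u2 - A2)" "n dvd (w1 - B1)" "n dvd (w2 - B2)"
  shows "n dvd ((u1*w2 - u2*w1) - (A1*B2 - A2*B1))"
proof -
  have "(u1*w2 - u2*w1) - (A1*B2 - A2*B1) = (u1*(w2-B2) + B2*(u1-A1)) - (u2*(w1-B1) + B1*(u2-A2))"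
    by (simp add: algebra_simps)
  moreover have "n dvd (u1*(w2-B2) + B2*(u1-A1)) - (u2*(w1-B1) + B1*(u2-A2))"
  proof -
    have 1: "n dvd u1*(w2-B2)" using assms(4) by (simp add: dvd_mult)
    have 2: "n dvd B2*(u1-A1)" using assms(1) by (simp add: dvd_mult)
    have 3: "n dvd u2*(w1-B1)" using assms(3) by (simp add: dvd_mult)
    have 4: "n dvd B1*(u2-A2)" using assms(2) by (simp add: dvd_mult)
    show ?thesis using 1 2 3 4 by (intro dvd_diff dvd_add)
  qed
  ultimately show ?thesis by simp
qed

lemma dvd_cancel:
  fixes n k k' X :: int
  assumes "n dvd (k*X)" "k*k' = n - 1"
  shows "n dvd X"
proof -
  have "n dvd k'*(k*X)" using assms(1) by simp
  moreover have "k'*(k*X) = (k*k')*X" by (simp add: algebra_simps)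
  moreover have "(k*k')*X = n*X - X" unfolding assms(2) by (simp add: algebra_simps)
  ultimately have 1: "n dvd n*X - X" by simp
  have 2: "n dvd n*X" by simp
  have "n dvd n*X - (n*X - X)" using 2 1 by (rule dvd_diff)
  then show ?thesis by simp
qed

lemma arith_core:
  fixes t n u1 u2 w1 w2 :: int
  assumes t: "t \<ge> 1" and nd: "n = 2 * t\<^sup>2 + 2 * t + 1"
    and h1: "\<bar>u1 - (t+1)\<bar> + \<bar>u2\<bar> \<le> t" and h2: "\<bar>u1\<bar> + \<bar>u2\<bar> \<ge> 2*t+1"
    and h3: "\<bar>w1\<bar> + \<bar>w2 - (t+1)\<bar> \<le> t" and h4: "\<bar>w1\<bar> + \<bar>w2\<bar> \<ge> 2*t+1"
    and d: "n dvd (u1*w2 - u2*w1)"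
  shows "(u1 = t+1 \<and> u2 = t) \<or> (w1 = t \<and> w2 = t+1)"
proof -
  have nb: "n \<ge> 4*t+1" using n_big[OF t nd] .
  have A: "t+1 \<le> u1" "u1 \<le> 2*t+1" "\<bar>u2\<bar> = 2*t+1-u1" using h1 h2 by arith+
  have B: "t+1 \<le> w2" "w2 \<le> 2*t+1" "\<bar>w1\<bar> = 2*t+1-w2" using h3 h4 by arith+
  define a where "a = u1 - t - 1"
  define b where "b = w2 - t - 1"
  have ab: "0 \<le> a" "a \<le> t" "0 \<le> b" "b \<le> t" using A B unfolding a_def b_def by auto
  have u1e: "u1 = t+1+a" and w2e: "w2 = t+1+b" unfolding a_def b_def by auto
  have au2: "\<bar>u2\<bar> = t - a" and bw1: "\<bar>w1\<bar> = t - b" using A B unfolding a_def b_def by auto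
  have nn: "n = (t+1)*(t+1) + t*t" using nd by (simp add: power2_eq_square algebra_simps)
  show ?thesis
  proof (cases "u2*w1 \<ge> 0")
    case True
    then have "u2*w1 = \<bar>u2*w1\<bar>" by simp
    also have "\<dots> = (t-a)*(t-b)" by (simp add: abs_mult au2 bw1)
    finally have p: "u2*w1 = (t-a)*(t-b)" .
    define s where "s = 1 + a + b"
    have "u1*w2 - u2*w1 = (2*t+1)*s" unfolding p u1e w2e s_def by (simp add: algebra_simps)
    then have "n dvd (2*t+1)*s" using d by simp
    then have "n dvd (2*t+1)*((2*t+1)*s)" by simp
    moreover have "(2*t+1)*((2*t+1)*s) = n*(2*s) - s" unfolding nn by (simp add: algebra_simps)
    ultimately have q1: "n dvd n*(2*s) - s" by simp
    have q2: "n dvd n*(2*s)" by simp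
    have "n dvd n*(2*s) - (n*(2*s) - s)" using q2 q1 by (rule dvd_diff)
    then have "n dvd s" by simp
    moreover have "s > 0" "s \<le> 2*t+1" using ab unfolding s_def by auto
    ultimately have "n \<le> s" using zdvd_imp_le by simp
    then show ?thesis using \<open>s \<le> 2*t+1\<close> nb t by linarith
  next
    case False
    then have "u2*w1 = -\<bar>u2*w1\<bar>" by simp
    also have "\<dots> = -((t-a)*(t-b))" by (simp add: abs_mult au2 bw1)
    finally have p: "u2*w1 = -((t-a)*(t-b))" .
    define s where "s = a + b + 2*a*b"
    have "u1*w2 - u2*w1 = n + s" unfolding p u1e w2e s_def nn by (simp add: algebra_simps)
    then have "n dvd n + s" using d by simp
    then have "n dvd s" by (simp add: dvd_add_right_iff)
    have abt: "a*b \<le> t*t" using ab by (intro mult_mono) auto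
    have ab0: "0 \<le> a*b" using ab by simp
    have "s \<le> 2*t + 2*(t*t)" unfolding s_def using ab abt by linarith
    then have "s < n" unfolding nn by (simp add: algebra_simps)
    have "s = 0"
    proof (rule ccontr)
      assume "s \<noteq> 0"
      then have "s > 0" unfolding s_def using ab ab0 by linarith
      then have "n \<le> s" using zdvd_imp_le \<open>n dvd s\<close> by simp
      then show False using \<open>s < n\<close> by simp
    qed
    then have "a = 0" "b = 0" unfolding s_def using ab ab0 by linarith+
    then have u1v: "u1 = t+1" and w2v: "w2 = t+1" and "\<bar>u2\<bar> = t" "\<bar>w1\<bar> = t" using u1e w2e au2 bw1 by auto
    have "u2 = t \<or> (u2 = -t \<and> w1 = t)"
    proof (cases "u2 \<ge> 0")
      case True then show ?thesis using \<open>\<bar>u2\<bar> = t\<close> by simp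
    next
      case False
      then have "w1 > 0" using \<open>\<not> 0 \<le> u2*w1\<close> by (metis mult_nonpos_nonpos not_le less_imp_le zero_le_mult_iff)
      then show ?thesis using False \<open>\<bar>u2\<bar> = t\<close> \<open>\<bar>w1\<bar> = t\<close> by simp
    qed
    then show ?thesis using u1v w2v by auto
  qed
qed

lemma lw_swap: "n > 0 \<Longrightarrow> lee_wt1 n (x - y) = lee_wt1 n (y - x)"
  using lw_neg[of n "y - x"] by simp

lemma gen_preserve2:
  fixes n t a b x1 x2 :: int and c :: "nat \<Rightarrow> int \<times> int" and f g :: "int \<Rightarrow> int \<Rightarrow> int"
    and S :: "int \<Rightarrow> int \<Rightarrow> nat"
  assumes n: "n > 0"
  and pal1: "\<And>x y. palette n t c x y \<in> {1..nat n} \<and> lclose n t (x,y) (c (palette n t c x y))"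
  and pal2: "\<And>x y i. i \<in> {1..nat n} \<Longrightarrow> lclose n t (x,y) (c i) \<Longrightarrow> palette n t c x y = i"
  and cC: "\<And>i. i \<in> {1..nat n} \<Longrightarrow> \<exists>k. c i = ((x1 + k*a) mod n, (x2 + k*b) mod n)"
  and cS: "\<And>k. \<exists>j\<in>{1..nat n}. c j = ((x1 + k*a) mod n, (x2 + k*b) mod n)"
  and F: "\<And>k. \<exists>k'. n dvd (f (x1+k*a) (x2+k*b) - (x1+k'*a)) \<and> n dvd (g (x1+k*a) (x2+k*b) - (x2+k'*b))"
  and hiso: "\<And>p1 p2 q1 q2. lclose n t (p1,p2) (q1,q2) \<Longrightarrow> lclose n t (f p1 p2, g p1 p2) (f q1 q2, g q1 q2)"
  and hperf: "\<And>i j. f (i mod n) (j mod n) mod n = f i j mod n"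
  and hperg: "\<And>i j. g (i mod n) (j mod n) mod n = g i j mod n"
  and hinj: "\<And>i j i' j'. f i j mod n = f i' j' mod n \<Longrightarrow> g i j mod n = g i' j' mod n
                \<Longrightarrow> i mod n = i' mod n \<and> j mod n = j' mod n"
  and hrow: "\<And>i j j'. f i j mod n = f i j' mod n \<or> g i j mod n = g i j' mod n"
  and hcol: "\<And>i i' j. f i j mod n = f i' j mod n \<or> g i j mod n = g i' j mod n"
  and S: "S \<in> perfect_sudoku_grids n t c"
  shows "(\<lambda>i j. S (f i j) (g i j)) \<in> perfect_sudoku_grids n t c"
proof -
  have hcode: "\<exists>j\<in>{1..nat n}. f (fst (c i)) (snd (c i)) mod n = fst (c j) mod n \<and> g (fst (c i)) (snd (c i)) mod n = snd (c j) mod n"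
    if i: "i \<in> {1..nat n}" for i
  proof -
  obtain k where k: "c i = ((x1 + k*a) mod n, (x2 + k*b) mod n)" using cC[OF i] by blast
  obtain k' where k': "n dvd (f (x1+k*a) (x2+k*b) - (x1+k'*a))" "n dvd (g (x1+k*a) (x2+k*b) - (x2+k'*b))"
    using F by blast
  obtain j where j: "j \<in> {1..nat n}" "c j = ((x1 + k'*a) mod n, (x2 + k'*b) mod n)" using cS by blast
  have "f (fst (c i)) (snd (c i)) mod n = f (x1+k*a) (x2+k*b) mod n" using k hperf by simp
  also have "\<dots> = (x1+k'*a) mod n" using k'(1) by (simp add: mod_eq_dvd_iff)
  also have "\<dots> = fst (c j) mod n" using j by simp
  finally have 1: "f (fst (c i)) (snd (c i)) mod n = fst (c j) mod n" .
  have "g (fst (c i)) (snd (c i)) mod n = g (x1+k*a) (x2+k*b) mod n" using k hperg by simp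
  also have "\<dots> = (x2+k'*b) mod n" using k'(2) by (simp add: mod_eq_dvd_iff)
  also have "\<dots> = snd (c j) mod n" using j by simp
  finally have 2: "g (fst (c i)) (snd (c i)) mod n = snd (c j) mod n" .
  show "\<exists>j\<in>{1..nat n}. f (fst (c i)) (snd (c i)) mod n = fst (c j) mod n \<and> g (fst (c i)) (snd (c i)) mod n = snd (c j) mod n"
    using 1 2 j(1) by blast
  qed
  show ?thesis by (rule gen_preserve[OF n pal1 pal2 hcode hiso hperf hperg hinj hrow hcol S])
qed

lemma gen_group_pres:
  assumes "g \<in> gen_group F"
    and "\<forall>f\<in>F. \<forall>S\<in>P. f S \<in> P"
    and "\<forall>f\<in>F. \<forall>S\<in>P. inv f S \<in> P"
  shows "S \<in> P \<Longrightarrow> g S \<in> P"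
  using assms(1)
proof (induction arbitrary: S rule: gen_group.induct)
  case gen_id then show ?case by simp
next
  case (gen_mult f g) then show ?case using assms(2) by simp
next
  case (gen_inv f g) then show ?case using assms(3) by simp
qed

lemma rot_exists:
  fixes n t a b x1 x2 :: int and c :: "nat \<Rightarrow> int \<times> int"
  assumes t: "t \<ge> 1" and nd: "n = 2 * t\<^sup>2 + 2 * t + 1"
    and te: "t_error_correcting n t (span1 n a b)"
    and cC: "\<And>i. i \<in> {1..nat n} \<Longrightarrow> \<exists>k. c i = ((x1 + k*a) mod n, (x2 + k*b) mod n)"
    and cov: "\<And>p1 p2. \<exists>i\<in>{1..nat n}. lclose n t (p1, p2) (c i)"
  shows "\<exists>m. n dvd (m*a + b) \<and> n dvd (m*b - a)"
proof -
  have nb: "n \<ge> 4 * t + 1" using n_big[OF t nd] .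
  have n: "n > 0" using nb t by linarith
  obtain i where i: "i \<in> {1..nat n}" "lclose n t (x1 + t + 1, x2) (c i)" using cov by blast
  obtain k where k: "c i = ((x1 + k*a) mod n, (x2 + k*b) mod n)" using cC[OF i(1)] by blast
  have "lclose n t (x1 + t + 1, x2) (x1 + k*a, x2 + k*b)"
    using i(2) k lclose_cong[of "x1 + t + 1" n "x1 + t + 1" x2 x2 "(x1 + k*a) mod n" "x1 + k*a" "(x2 + k*b) mod n" "x2 + k*b" t] by simp
  moreover have "x1 + t + 1 - (x1 + k*a) = t + 1 - k*a" "x2 - (x2 + k*b) = - (k*b)" by simp_all
  ultimately have h: "lee_wt1 n (t + 1 - k*a) + lee_wt1 n (- (k*b)) \<le> t" unfolding lclose_def by simp
  obtain u1 u2 where u: "n dvd (u1 - k*a)" "n dvd (u2 - k*b)" "\<bar>u1 - (t+1)\<bar> + \<bar>u2\<bar> \<le> t" "\<bar>u1\<bar> + \<bar>u2\<bar> \<ge> 2*t+1"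
    using near[OF t nb h md[OF n te, of k]] by blast
  obtain i' where i': "i' \<in> {1..nat n}" "lclose n t (x1, x2 + t + 1) (c i')" using cov by blast
  obtain k' where k': "c i' = ((x1 + k'*a) mod n, (x2 + k'*b) mod n)" using cC[OF i'(1)] by blast
  have "lclose n t (x1, x2 + t + 1) (x1 + k'*a, x2 + k'*b)"
    using i'(2) k' lclose_cong[of x1 n x1 "x2 + t + 1" "x2 + t + 1" "(x1 + k'*a) mod n" "x1 + k'*a" "(x2 + k'*b) mod n" "x2 + k'*b" t] by simp
  moreover have "x2 + t + 1 - (x2 + k'*b) = t + 1 - k'*b" "x1 - (x1 + k'*a) = - (k'*a)" by simp_all
  ultimately have h': "lee_wt1 n (t + 1 - k'*b) + lee_wt1 n (- (k'*a)) \<le> t" unfolding lclose_def by simp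
  have md': "lee_wt1 n (k'*b) + lee_wt1 n (k'*a) \<ge> 2*t+1" if "(k'*b) mod n \<noteq> 0 \<or> (k'*a) mod n \<noteq> 0"
    using md[OF n te, of k'] that by linarith
  obtain w2 w1 where w: "n dvd (w2 - k'*b)" "n dvd (w1 - k'*a)" "\<bar>w2 - (t+1)\<bar> + \<bar>w1\<bar> \<le> t" "\<bar>w2\<bar> + \<bar>w1\<bar> \<ge> 2*t+1"
    using near[OF t nb h' md'] by blast
  have "n dvd ((u1*w2 - u2*w1) - ((k*a)*(k'*b) - (k*b)*(k'*a)))"
    by (rule dvd_det[OF u(1) u(2) w(2) w(1)])
  moreover have "(k*a)*(k'*b) - (k*b)*(k'*a) = 0" by (simp add: algebra_simps)
  ultimately have d: "n dvd (u1*w2 - u2*w1)" by simp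
  have w3: "\<bar>w1\<bar> + \<bar>w2 - (t+1)\<bar> \<le> t" "\<bar>w1\<bar> + \<bar>w2\<bar> \<ge> 2*t+1" using w by linarith+
  have nn: "n = 2*t*t + 2*t + 1" using nd by (simp add: power2_eq_square)
  from arith_core[OF t nd u(3) u(4) w3 d] show ?thesis
  proof
    assume "u1 = t+1 \<and> u2 = t"
    then have e1: "n dvd (t+1 - k*a)" and e2: "n dvd (t - k*b)" using u(1,2) by auto
    define D where "D = (t+1)*b - t*a"
    have "D = (t+1 - k*a)*b - (t - k*b)*a" unfolding D_def by (simp add: algebra_simps)
    then have dD: "n dvd D" using e1 e2 by (simp add: dvd_diff dvd_mult2)
    define m where "m = -(2*t+1)"
    have "(t+1)*(m*a + b) = D - n*a" unfolding m_def D_def nn by (simp add: algebra_simps)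
    then have "n dvd (t+1)*(m*a + b)" using dD by (simp add: dvd_diff)
    then have X: "n dvd (m*a + b)" by (rule dvd_cancel[where k'="2*t"]) (simp add: nn algebra_simps)
    have "(t+1)*(m*b - a) = -(2*t+1)*D - n*a" unfolding m_def D_def nn by (simp add: algebra_simps)
    then have "n dvd (t+1)*(m*b - a)" using dD by (simp add: dvd_diff)
    then have Y: "n dvd (m*b - a)" by (rule dvd_cancel[where k'="2*t"]) (simp add: nn algebra_simps)
    show ?thesis using X Y by blast
  next
    assume "w1 = t \<and> w2 = t+1"
    then have e1: "n dvd (t - k'*a)" and e2: "n dvd (t+1 - k'*b)" using w(1,2) by auto
    define D where "D = t*b - (t+1)*a"
    have "D = (t - k'*a)*b - (t+1 - k'*b)*a" unfolding D_def by (simp add: algebra_simps)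
    then have dD: "n dvd D" using e1 e2 by (simp add: dvd_diff dvd_mult2)
    define m where "m = 2*t+1"
    have "t*(m*a + b) = D + n*a" unfolding m_def D_def nn by (simp add: algebra_simps)
    then have "n dvd t*(m*a + b)" using dD by (simp add: dvd_add)
    then have X: "n dvd (m*a + b)" by (rule dvd_cancel[where k'="2*t+2"]) (simp add: nn algebra_simps)
    have "t*(m*b - a) = (2*t+1)*D + n*a" unfolding m_def D_def nn by (simp add: algebra_simps)
    then have "n dvd t*(m*b - a)" using dD by (simp add: dvd_add)
    then have Y: "n dvd (m*b - a)" by (rule dvd_cancel[where k'="2*t+2"]) (simp add: nn algebra_simps)
    show ?thesis using X Y by blast
  qed
qed

lemma dvd_j_mod: "(n::int) dvd (j - j mod n)"
  by (simp add: minus_mod_eq_mult_div)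

lemma pres_T:
  fixes n t a b x1 x2 :: int and c :: "nat \<Rightarrow> int \<times> int" and S :: "int \<Rightarrow> int \<Rightarrow> nat"
  assumes n: "n > 0"
  and pal1: "\<And>x y. palette n t c x y \<in> {1..nat n} \<and> lclose n t (x,y) (c (palette n t c x y))"
  and pal2: "\<And>x y i. i \<in> {1..nat n} \<Longrightarrow> lclose n t (x,y) (c i) \<Longrightarrow> palette n t c x y = i"
  and cC: "\<And>i. i \<in> {1..nat n} \<Longrightarrow> \<exists>k. c i = ((x1 + k*a) mod n, (x2 + k*b) mod n)"
  and cS: "\<And>k. \<exists>j\<in>{1..nat n}. c j = ((x1 + k*a) mod n, (x2 + k*b) mod n)"
  and S: "S \<in> perfect_sudoku_grids n t c"
  and e: "e = 1 \<or> e = -1"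
  shows "(\<lambda>i j. S (i - e*a) (j - e*b)) \<in> perfect_sudoku_grids n t c"
proof -
  have F: "\<exists>k'. n dvd ((x1+k*a) - e*a - (x1+k'*a)) \<and> n dvd ((x2+k*b) - e*b - (x2+k'*b))" for k
    by (rule exI[of _ "k - e"]) (simp add: algebra_simps)
  have hiso: "lclose n t (p1 - e*a, p2 - e*b) (q1 - e*a, q2 - e*b)" if "lclose n t (p1,p2) (q1,q2)" for p1 p2 q1 q2
    using that unfolding lclose_def by simp
  have hperf: "(i mod n - e*a) mod n = (i - e*a) mod n" for i :: int by (simp add: mod_diff_left_eq)
  have hperg: "(j mod n - e*b) mod n = (j - e*b) mod n" for j :: int by (simp add: mod_diff_left_eq)
  have hinj: "i mod n = i' mod n \<and> j mod n = j' mod n"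
    if "(i - e*a) mod n = (i' - e*a) mod n" "(j - e*b) mod n = (j' - e*b) mod n" for i j i' j' :: int
    using that by (simp add: mod_eq_dvd_iff)
  have hrow: "(i - e*a) mod n = (i - e*a) mod n \<or> (j - e*b) mod n = (j' - e*b) mod n" for i j j' :: int by simp
  have hcol: "(i - e*a) mod n = (i' - e*a) mod n \<or> (j - e*b) mod n = (j - e*b) mod n" for i i' j :: int by simp
  show ?thesis
    by (rule gen_preserve2[where f="\<lambda>i j. i - e*a" and g="\<lambda>i j. j - e*b", OF n pal1 pal2 cC cS F hiso hperf hperg hinj hrow hcol S])
qed

lemma pres_R:
  fixes n t a b x1 x2 m :: int and c :: "nat \<Rightarrow> int \<times> int" and S :: "int \<Rightarrow> int \<Rightarrow> nat"
  assumes n: "n > 0"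
  and pal1: "\<And>x y. palette n t c x y \<in> {1..nat n} \<and> lclose n t (x,y) (c (palette n t c x y))"
  and pal2: "\<And>x y i. i \<in> {1..nat n} \<Longrightarrow> lclose n t (x,y) (c i) \<Longrightarrow> palette n t c x y = i"
  and cC: "\<And>i. i \<in> {1..nat n} \<Longrightarrow> \<exists>k. c i = ((x1 + k*a) mod n, (x2 + k*b) mod n)"
  and cS: "\<And>k. \<exists>j\<in>{1..nat n}. c j = ((x1 + k*a) mod n, (x2 + k*b) mod n)"
  and S: "S \<in> perfect_sudoku_grids n t c"
  and m1: "n dvd (m*a + b)" and m2: "n dvd (m*b - a)"
  shows "(\<lambda>i j. S (n - 1 - (j - (x1 + x2 + 1))) (i - (x1 - x2))) \<in> perfect_sudoku_grids n t c"
proof -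
  have F: "\<exists>k'. n dvd ((n - 1 - ((x2+k*b) - (x1 + x2 + 1))) - (x1+k'*a)) \<and> n dvd (((x1+k*a) - (x1 - x2)) - (x2+k'*b))" for k
  proof (rule exI[of _ "k*m"], rule conjI)
    have "(n - 1 - ((x2+k*b) - (x1 + x2 + 1))) - (x1+(k*m)*a) = n - k*(m*a + b)" by (simp add: algebra_simps)
    then show "n dvd (n - 1 - ((x2+k*b) - (x1 + x2 + 1))) - (x1+(k*m)*a)" using m1 by (simp add: dvd_diff dvd_mult)
    have "((x1+k*a) - (x1 - x2)) - (x2+(k*m)*b) = - (k*(m*b - a))" by (simp add: algebra_simps)
    then show "n dvd ((x1+k*a) - (x1 - x2)) - (x2+(k*m)*b)" using m2 by (simp add: dvd_mult)
  qed
  have hiso: "lclose n t (n - 1 - (p2 - (x1 + x2 + 1)), p1 - (x1 - x2)) (n - 1 - (q2 - (x1 + x2 + 1)), q1 - (x1 - x2))"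
    if "lclose n t (p1,p2) (q1,q2)" for p1 p2 q1 q2
  proof -
    have "(n - 1 - (p2 - (x1 + x2 + 1))) - (n - 1 - (q2 - (x1 + x2 + 1))) = q2 - p2" by simp
    moreover have "(p1 - (x1 - x2)) - (q1 - (x1 - x2)) = p1 - q1" by simp
    moreover have "lee_wt1 n (q2 - p2) = lee_wt1 n (p2 - q2)" by (rule lw_swap[OF n])
    ultimately show ?thesis using that unfolding lclose_def by simp
  qed
  have hperf: "(n - 1 - (j mod n - (x1 + x2 + 1))) mod n = (n - 1 - (j - (x1 + x2 + 1))) mod n" for j :: int
  proof -
    have "(n - 1 - (j mod n - (x1 + x2 + 1))) - (n - 1 - (j - (x1 + x2 + 1))) = j - j mod n" by simp
    then show ?thesis unfolding mod_eq_dvd_iff using dvd_j_mod by simp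
  qed
  have hperg: "(i mod n - (x1 - x2)) mod n = (i - (x1 - x2)) mod n" for i :: int by (simp add: mod_diff_left_eq)
  have hinj: "i mod n = i' mod n \<and> j mod n = j' mod n"
    if "(n - 1 - (j - (x1 + x2 + 1))) mod n = (n - 1 - (j' - (x1 + x2 + 1))) mod n"
       "(i - (x1 - x2)) mod n = (i' - (x1 - x2)) mod n" for i j i' j' :: int
  proof -
    have "(n - 1 - (j - (x1 + x2 + 1))) - (n - 1 - (j' - (x1 + x2 + 1))) = j' - j" by simp
    then have "n dvd j' - j" using that(1) unfolding mod_eq_dvd_iff by simp
    then have "n dvd j - j'" by (simp add: dvd_diff_commute)
    moreover have "n dvd i - i'" using that(2) unfolding mod_eq_dvd_iff by simp
    ultimately show ?thesis unfolding mod_eq_dvd_iff by simp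
  qed
  have hrow: "(n - 1 - (j - (x1 + x2 + 1))) mod n = (n - 1 - (j' - (x1 + x2 + 1))) mod n \<or> (i - (x1 - x2)) mod n = (i - (x1 - x2)) mod n" for i j j' :: int by simp
  have hcol: "(n - 1 - (j - (x1 + x2 + 1))) mod n = (n - 1 - (j - (x1 + x2 + 1))) mod n \<or> (i - (x1 - x2)) mod n = (i' - (x1 - x2)) mod n" for i i' j :: int by simp
  show ?thesis
    by (rule gen_preserve2[where f="\<lambda>i j. n - 1 - (j - (x1 + x2 + 1))" and g="\<lambda>i j. i - (x1 - x2)", OF n pal1 pal2 cC cS F hiso hperf hperg hinj hrow hcol S])
qed

lemma pres_R':
  fixes n t a b x1 x2 m :: int and c :: "nat \<Rightarrow> int \<times> int" and S :: "int \<Rightarrow> int \<Rightarrow> nat"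
  assumes n: "n > 0"
  and pal1: "\<And>x y. palette n t c x y \<in> {1..nat n} \<and> lclose n t (x,y) (c (palette n t c x y))"
  and pal2: "\<And>x y i. i \<in> {1..nat n} \<Longrightarrow> lclose n t (x,y) (c i) \<Longrightarrow> palette n t c x y = i"
  and cC: "\<And>i. i \<in> {1..nat n} \<Longrightarrow> \<exists>k. c i = ((x1 + k*a) mod n, (x2 + k*b) mod n)"
  and cS: "\<And>k. \<exists>j\<in>{1..nat n}. c j = ((x1 + k*a) mod n, (x2 + k*b) mod n)"
  and S: "S \<in> perfect_sudoku_grids n t c"
  and m1: "n dvd (m*a + b)" and m2: "n dvd (m*b - a)"
  shows "(\<lambda>i j. S (j + (x1 - x2)) (n - 1 - (i - (x1 + x2 + 1)))) \<in> perfect_sudoku_grids n t c"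
proof -
  have F: "\<exists>k'. n dvd (((x2+k*b) + (x1 - x2)) - (x1+k'*a)) \<and> n dvd ((n - 1 - ((x1+k*a) - (x1 + x2 + 1))) - (x2+k'*b))" for k
  proof (rule exI[of _ "-(k*m)"], rule conjI)
    have "((x2+k*b) + (x1 - x2)) - (x1+(-(k*m))*a) = k*(m*a + b)" by (simp add: algebra_simps)
    then show "n dvd ((x2+k*b) + (x1 - x2)) - (x1+(-(k*m))*a)" using m1 by (simp add: dvd_mult)
    have "(n - 1 - ((x1+k*a) - (x1 + x2 + 1))) - (x2+(-(k*m))*b) = n + k*(m*b - a)" by (simp add: algebra_simps)
    then show "n dvd (n - 1 - ((x1+k*a) - (x1 + x2 + 1))) - (x2+(-(k*m))*b)" using m2 by (simp add: dvd_add dvd_mult)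
  qed
  have hiso: "lclose n t (p2 + (x1 - x2), n - 1 - (p1 - (x1 + x2 + 1))) (q2 + (x1 - x2), n - 1 - (q1 - (x1 + x2 + 1)))"
    if "lclose n t (p1,p2) (q1,q2)" for p1 p2 q1 q2
  proof -
    have "(n - 1 - (p1 - (x1 + x2 + 1))) - (n - 1 - (q1 - (x1 + x2 + 1))) = q1 - p1" by simp
    moreover have "(p2 + (x1 - x2)) - (q2 + (x1 - x2)) = p2 - q2" by simp
    moreover have "lee_wt1 n (q1 - p1) = lee_wt1 n (p1 - q1)" by (rule lw_swap[OF n])
    ultimately show ?thesis using that unfolding lclose_def by simp
  qed
  have hperf: "(j mod n + (x1 - x2)) mod n = (j + (x1 - x2)) mod n" for j :: int by (simp add: mod_add_left_eq)
  have hperg: "(n - 1 - (i mod n - (x1 + x2 + 1))) mod n = (n - 1 - (i - (x1 + x2 + 1))) mod n" for i :: int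
  proof -
    have "(n - 1 - (i mod n - (x1 + x2 + 1))) - (n - 1 - (i - (x1 + x2 + 1))) = i - i mod n" by simp
    then show ?thesis unfolding mod_eq_dvd_iff using dvd_j_mod by simp
  qed
  have hinj: "i mod n = i' mod n \<and> j mod n = j' mod n"
    if "(j + (x1 - x2)) mod n = (j' + (x1 - x2)) mod n"
       "(n - 1 - (i - (x1 + x2 + 1))) mod n = (n - 1 - (i' - (x1 + x2 + 1))) mod n" for i j i' j' :: int
  proof -
    have "(n - 1 - (i - (x1 + x2 + 1))) - (n - 1 - (i' - (x1 + x2 + 1))) = i' - i" by simp
    then have "n dvd i' - i" using that(2) unfolding mod_eq_dvd_iff by simp
    then have "n dvd i - i'" by (simp add: dvd_diff_commute)
    moreover have "n dvd j - j'" using that(1) unfolding mod_eq_dvd_iff by simp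
    ultimately show ?thesis unfolding mod_eq_dvd_iff by simp
  qed
  have hrow: "(j + (x1 - x2)) mod n = (j' + (x1 - x2)) mod n \<or> (n - 1 - (i - (x1 + x2 + 1))) mod n = (n - 1 - (i - (x1 + x2 + 1))) mod n" for i j j' :: int by simp
  have hcol: "(j + (x1 - x2)) mod n = (j + (x1 - x2)) mod n \<or> (n - 1 - (i - (x1 + x2 + 1))) mod n = (n - 1 - (i' - (x1 + x2 + 1))) mod n" for i i' j :: int by simp
  show ?thesis
    by (rule gen_preserve2[where f="\<lambda>i j. j + (x1 - x2)" and g="\<lambda>i j. n - 1 - (i - (x1 + x2 + 1))", OF n pal1 pal2 cC cS F hiso hperf hperg hinj hrow hcol S])
qed

theorem mainTheorem2:
  fixes t n a b x1 x2 :: int and c :: "nat \<Rightarrow> int \<times> int"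
  assumes "t \<ge> 1"
    and "n = 2 * t\<^sup>2 + 2 * t + 1"
    and "a \<in> {0..<n}" and "b \<in> {0..<n}" and "(a, b) \<noteq> (0, 0)"
    and "perfect_code n (span1 n a b)"
    and "t_error_correcting n t (span1 n a b)"
    and "x1 \<in> {0..<n}" and "x2 \<in> {0..<n}"
    and "bij_betw c {1..nat n} (translate_code n (x1, x2) (span1 n a b))"
  shows "\<forall>S \<in> perfect_sudoku_grids n t c.
           \<forall>g \<in> gen_group {tau2_pow (x1 + x2 + 1) \<circ> tau1_pow (x1 - x2) \<circ> rot n,
                            tau1_pow a \<circ> tau2_pow b}.
             g S \<in> perfect_sudoku_grids n t c"
proof -
  have nb: "n \<ge> 4*t+1" using n_big[OF assms(1,2)] .
  have n: "n > 0" using nb assms(1) by linarith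
  have img: "c ` {1..nat n} = {((x1 + k*a) mod n, (x2 + k*b) mod n) | k. True}"
    using assms(10) code_rep[of n x1 x2 a b] unfolding bij_betw_def by simp
  have inj: "inj_on c {1..nat n}" using assms(10) unfolding bij_betw_def by blast
  have cC: "\<exists>k. c i = ((x1 + k*a) mod n, (x2 + k*b) mod n)" if "i \<in> {1..nat n}" for i
  proof -
    have "c i \<in> c ` {1..nat n}" using that by blast
    then show ?thesis unfolding img by blast
  qed
  have cS: "\<exists>j\<in>{1..nat n}. c j = ((x1 + k*a) mod n, (x2 + k*b) mod n)" for k
  proof -
    have "((x1 + k*a) mod n, (x2 + k*b) mod n) \<in> c ` {1..nat n}" unfolding img by blast
    then show ?thesis by (metis imageE)
  qed
  have un: "i = j" if "i \<in> {1..nat n}" "j \<in> {1..nat n}" "lclose n t (p1, p2) (c i)" "lclose n t (p1, p2) (c j)"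
    for p1 p2 i j
    using uniq[OF n assms(7) cC inj that] .
  have cov: "\<exists>i\<in>{1..nat n}. lclose n t (p1, p2) (c i)" for p1 p2
    using cover[OF assms(1,2,7) cC inj] .
  have pal1: "palette n t c x y \<in> {1..nat n} \<and> lclose n t (x, y) (c (palette n t c x y))" for x y
    using pal_facts(1)[OF n cov un] .
  have pal2: "palette n t c x y = i" if "i \<in> {1..nat n}" "lclose n t (x, y) (c i)" for x y i
    using pal_facts(2)[OF n cov un that] .
  obtain m where m1: "n dvd (m*a + b)" and m2: "n dvd (m*b - a)"
    using rot_exists[OF assms(1,2,7) cC cov] by blast
  define P where "P = perfect_sudoku_grids n t c"
  define R :: "(int \<Rightarrow> int \<Rightarrow> nat) \<Rightarrow> (int \<Rightarrow> int \<Rightarrow> nat)"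
    where "R = tau2_pow (x1 + x2 + 1) \<circ> tau1_pow (x1 - x2) \<circ> rot n"
  define T :: "(int \<Rightarrow> int \<Rightarrow> nat) \<Rightarrow> (int \<Rightarrow> int \<Rightarrow> nat)"
    where "T = tau1_pow a \<circ> tau2_pow b"
  define R' :: "(int \<Rightarrow> int \<Rightarrow> nat) \<Rightarrow> (int \<Rightarrow> int \<Rightarrow> nat)"
    where "R' = (\<lambda>A i j. A (j + (x1 - x2)) (n - 1 - (i - (x1 + x2 + 1))))"
  define T' :: "(int \<Rightarrow> int \<Rightarrow> nat) \<Rightarrow> (int \<Rightarrow> int \<Rightarrow> nat)"
    where "T' = (\<lambda>A i j. A (i - (-1)*a) (j - (-1)*b))"
  have R_eq: "R A = (\<lambda>i j. A (n - 1 - (j - (x1 + x2 + 1))) (i - (x1 - x2)))" for A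
    unfolding R_def by (simp add: tau1_pow_def tau2_pow_def rot_def)
  have T_eq: "T A = (\<lambda>i j. A (i - 1*a) (j - 1*b))" for A
    unfolding T_def by (simp add: tau1_pow_def tau2_pow_def)
  have invR: "inv R = R'"
  proof (rule inv_equality)
    fix A show "R' (R A) = A" unfolding R_eq R'_def by simp
  next
    fix A show "R (R' A) = A" unfolding R_eq R'_def by simp
  qed
  have invT: "inv T = T'"
  proof (rule inv_equality)
    fix A show "T' (T A) = A" unfolding T_eq T'_def by simp
  next
    fix A show "T (T' A) = A" unfolding T_eq T'_def by simp
  qed
  have pR: "R S \<in> P" if "S \<in> P" for S
    unfolding R_eq P_def using pres_R[OF n pal1 pal2 cC cS _ m1 m2] that unfolding P_def by blast
  have pR': "R' S \<in> P" if "S \<in> P" for S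
    unfolding R'_def P_def using pres_R'[OF n pal1 pal2 cC cS _ m1 m2] that unfolding P_def by blast
  have pT: "T S \<in> P" if "S \<in> P" for S
    unfolding T_eq P_def using pres_T[OF n pal1 pal2 cC cS _, of S 1] that unfolding P_def by simp
  have pT': "T' S \<in> P" if "S \<in> P" for S
    unfolding T'_def P_def using pres_T[OF n pal1 pal2 cC cS _, of S "-1"] that unfolding P_def by simp
  have H1: "\<forall>f\<in>{R, T}. \<forall>S\<in>P. f S \<in> P"
  proof (intro ballI)
    fix f S assume f: "f \<in> {R, T}" and S: "S \<in> P"
    from f have "f = R \<or> f = T" by simp
    then show "f S \<in> P"
    proof
      assume "f = R" then show ?thesis using pR[OF S] by simp
    next
      assume "f = T" then show ?thesis using pT[OF S] by simp
    qed
  qed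
  have H2: "\<forall>f\<in>{R, T}. \<forall>S\<in>P. inv f S \<in> P"
  proof (intro ballI)
    fix f S assume f: "f \<in> {R, T}" and S: "S \<in> P"
    from f have "f = R \<or> f = T" by simp
    then show "inv f S \<in> P"
    proof
      assume "f = R" then show ?thesis using pR'[OF S] invR by simp
    next
      assume "f = T" then show ?thesis using pT'[OF S] invT by simp
    qed
  qed
  show ?thesis
  proof (intro ballI)
    fix S :: "int \<Rightarrow> int \<Rightarrow> nat" and g :: "(int \<Rightarrow> int \<Rightarrow> nat) \<Rightarrow> (int \<Rightarrow> int \<Rightarrow> nat)"
    assume S: "S \<in> perfect_sudoku_grids n t c"
      and g: "g \<in> gen_group {tau2_pow (x1 + x2 + 1) \<circ> tau1_pow (x1 - x2) \<circ> rot n, tau1_pow a \<circ> tau2_pow b}"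
    have g': "g \<in> gen_group {R, T}" using g unfolding R_def T_def .
    show "g S \<in> perfect_sudoku_grids n t c"
      proof -
      have "S \<in> P" using S unfolding P_def .
      then have "g S \<in> P" by (rule gen_group_pres[OF g' H1 H2])
      then show ?thesis unfolding P_def .
    qed
  qed
qed

end
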